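(* Let $k\geq 2$ and let $G$ be a bipartite graph of order $n\geq 11k-4$ that does not contain $k\cdot P_3$ as a subgraph. Then $e(G)\leq (k-1)(n-k+1)$. Moreover, if $k=2$, equality holds if and only if $G=T_{n,s}$ for some $s\in\{0,1,\dots,\lfloor (n-1)/2\rfloor\}$; if $k\geq 3$, equality holds if and only if $G=K_{k-1,n-k+1}$.
   Context: Graphs are finite and simple; $e(G)$ is the number of edges. $P_3$ is the path on 3 vertices and $k\cdot P_3$ is the disjoint union of $k$ copies of $P_3$. $K_{a,b}$ is the complete bipartite graph with parts of sizes $a$ and $b$. For $0\leq s\leq \lfloor (n-1)/2\rfloor$, $T_{n,s}$ is the tree of order $n$ obtained by taking $s$ paths $P_3$ and $n-2s-1$ paths $P_2$ and identifying an end vertex of each of these paths into a single common vertex (so $T_{n,0}$ is the star of order $n$). *)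

theory Defs
  imports Main
begin

definition sgraph :: "'a set \<Rightarrow> 'a set set \<Rightarrow> bool" where
  "sgraph V E \<longleftrightarrow> finite V \<and>
     (\<forall>e\<in>E. \<exists>u v. e = {u, v} \<and> u \<noteq> v \<and> u \<in> V \<and> v \<in> V)"

definition bipartite :: "'a set \<Rightarrow> 'a set set \<Rightarrow> bool" where
  "bipartite V E \<longleftrightarrow> (\<exists>A B. A \<union> B = V \<and> A \<inter> B = {} \<and>
     (\<forall>e\<in>E. \<exists>u v. e = {u, v} \<and> u \<in> A \<and> v \<in> B))"

text \<open>G contains k disjoint copies of P3 (a_i - b_i - c_i) as a subgraph.\<close>
definition contains_kP3 :: "nat \<Rightarrow> 'a set \<Rightarrow> 'a set set \<Rightarrow> bool" where
  "contains_kP3 k V E \<longleftrightarrow> (\<exists>a b c :: nat \<Rightarrow> 'a.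
     (\<forall>i<k. a i \<in> V \<and> b i \<in> V \<and> c i \<in> V \<and> {a i, b i} \<in> E \<and> {b i, c i} \<in> E) \<and>
     inj_on (\<lambda>(i, j). if j = (0::nat) then a i else if j = 1 then b i else c i)
            ({..<k} \<times> {0, 1, 2}))"

definition graph_iso :: "'a set \<Rightarrow> 'a set set \<Rightarrow> 'b set \<Rightarrow> 'b set set \<Rightarrow> bool" where
  "graph_iso V E W F \<longleftrightarrow> (\<exists>f. bij_betw f V W \<and>
     (\<forall>u\<in>V. \<forall>v\<in>V. {u, v} \<in> E \<longleftrightarrow> {f u, f v} \<in> F))"

text \<open>T_{n,s} on vertices {0..<n}: centre 0; paths 0 - i - (s+i) for 1 \<le> i \<le> s;
  pendant edges 0 - j for 2s+1 \<le> j < n.\<close>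
definition T_verts :: "nat \<Rightarrow> nat set" where
  "T_verts n = {..<n}"

definition T_edges :: "nat \<Rightarrow> nat \<Rightarrow> nat set set" where
  "T_edges n s = {{0, i} | i. 1 \<le> i \<and> i \<le> s} \<union> {{i, s + i} | i. 1 \<le> i \<and> i \<le> s}
                 \<union> {{0, j} | j. 2 * s + 1 \<le> j \<and> j < n}"

definition K_verts :: "nat \<Rightarrow> nat \<Rightarrow> nat set" where
  "K_verts a b = {..<a + b}"

definition K_edges :: "nat \<Rightarrow> nat \<Rightarrow> nat set set" where
  "K_edges a b = {{i, j} | i j. i < a \<and> a \<le> j \<and> j < a + b}"

end

theory Submission
  imports Defs
begin


definition inc :: "'a set set \<Rightarrow> 'a \<Rightarrow> 'a set set" where
  "inc E v = {e\<in>E. v\<in>e}"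

definition nbr :: "'a set set \<Rightarrow> 'a \<Rightarrow> 'a set" where
  "nbr E v = {u. {v,u}\<in>E}"

lemma sgraph_sub: assumes "sgraph V E" "e \<in> E" shows "e \<subseteq> V"
proof -
  obtain u w where "e = {u,w}" "u \<in> V" "w \<in> V" using assms unfolding sgraph_def by blast
  thus ?thesis by simp
qed

lemma sgraph_finE: "sgraph V E \<Longrightarrow> finite E"
proof -
  assume s: "sgraph V E"
  hence "E \<subseteq> Pow V" using sgraph_sub by blast
  moreover have "finite V" using s unfolding sgraph_def by blast
  ultimately show ?thesis by (meson finite_Pow_iff finite_subset)
qed

lemma sgraph_finV: "sgraph V E \<Longrightarrow> finite V"
  unfolding sgraph_def by blast

lemma sgraph_edge: "sgraph V E \<Longrightarrow> e \<in> E \<Longrightarrow> \<exists>u w. e = {u,w} \<and> u \<noteq> w \<and> u \<in> V \<and> w \<in> V"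
  unfolding sgraph_def by blast

lemma sgraph_noloop: assumes "sgraph V E" "{u,w} \<in> E" shows "u \<noteq> w"
proof
  assume uw: "u = w"
  obtain a b where "{u,w} = {a,b}" "a \<noteq> b" using assms unfolding sgraph_def by blast
  with uw show False by (auto simp: doubleton_eq_iff)
qed

lemma sgraph_in: assumes "sgraph V E" "{u,w} \<in> E" shows "u \<in> V \<and> w \<in> V"
  using sgraph_sub[OF assms] by simp

lemma nbr_sub: assumes "sgraph V E" shows "nbr E v \<subseteq> V"
  unfolding nbr_def using sgraph_in[OF assms] by auto

lemma nbr_fin: "sgraph V E \<Longrightarrow> finite (nbr E v)"
  using nbr_sub sgraph_finV finite_subset by metis

lemma v_notin_nbr: assumes s: "sgraph V E" shows "v \<notin> nbr E v"
  unfolding nbr_def using sgraph_noloop[OF s, of v v] by auto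

lemma inc_eq: assumes s: "sgraph V E" shows "inc E v = (\<lambda>u. {v,u}) ` nbr E v"
proof (rule set_eqI)
  fix e
  show "e \<in> inc E v \<longleftrightarrow> e \<in> (\<lambda>u. {v,u}) ` nbr E v"
  proof
    assume "e \<in> inc E v"
    hence e: "e \<in> E" "v \<in> e" unfolding inc_def by auto
    obtain u w where uw: "e = {u,w}" using sgraph_edge[OF s e(1)] by (elim exE conjE)
    have "\<exists>x. e = {v,x}"
    proof (cases "v = u")
      case True show ?thesis by (rule exI[of _ w]) (simp add: uw True)
    next
      case False hence "v = w" using e(2) uw by simp
      show ?thesis by (rule exI[of _ u]) (simp add: uw \<open>v = w\<close> insert_commute)
    qed
    then obtain x where x: "e = {v,x}" by blast
    hence "x \<in> nbr E v" using e(1) unfolding nbr_def by simp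
    thus "e \<in> (\<lambda>u. {v,u}) ` nbr E v" using x by (rule image_eqI[rotated])
  next
    assume "e \<in> (\<lambda>u. {v,u}) ` nbr E v"
    then obtain x where "x \<in> nbr E v" "e = {v,x}" by blast
    thus "e \<in> inc E v" unfolding inc_def nbr_def by simp
  qed
qed

lemma card_inc: assumes "sgraph V E" shows "card (inc E v) = card (nbr E v)"
proof -
  have "inj_on (\<lambda>u. {v,u}) (nbr E v)"
  proof (rule inj_onI)
    fix x y assume "{v,x} = {v,y}"
    thus "x = y" by (auto simp: doubleton_eq_iff)
  qed
  thus ?thesis using inc_eq[OF assms] card_image by metis
qed

lemma inc_fin: assumes "sgraph V E" shows "finite (inc E v)"
  using sgraph_finE[OF assms] unfolding inc_def by auto

lemma handshake:
  assumes s: "sgraph V E"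
  shows "(\<Sum>v\<in>V. card (inc E v)) = 2 * card E"
proof -
  have fV: "finite V" using s sgraph_finV by blast
  have fE: "finite E" using s sgraph_finE by blast
  have "(\<Sum>v\<in>V. card (inc E v)) = card (SIGMA v:V. inc E v)"
    using fV inc_fin[OF s] by (simp add: card_SigmaI)
  also have "(SIGMA v:V. inc E v) = (\<lambda>(e,v). (v,e)) ` (SIGMA e:E. e)"
    using sgraph_sub[OF s] unfolding inc_def by auto
  also have "card \<dots> = card (SIGMA e:E. e)"
    by (rule card_image) (auto simp: inj_on_def)
  also have "\<dots> = (\<Sum>e\<in>E. card e)"
    apply (rule card_SigmaI[OF fE]) using fV sgraph_sub[OF s] by (meson finite_subset)
  also have "\<dots> = (\<Sum>e\<in>E. 2)"
  proof (rule sum.cong)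
    fix e assume "e \<in> E"
    then obtain u w where "e = {u,w}" "u \<noteq> w" using sgraph_edge[OF s] by blast
    thus "card e = 2" by simp
  qed simp
  also have "\<dots> = 2 * card E" by simp
  finally show ?thesis .
qed

lemma matching_bound:
  assumes s: "sgraph V E" and d: "\<And>w. w \<in> V \<Longrightarrow> card (inc E w) \<le> 1"
  shows "2 * card E \<le> card V"
proof -
  have "(\<Sum>v\<in>V. card (inc E v)) \<le> (\<Sum>v\<in>V. 1)" using d by (meson sum_mono)
  hence "(\<Sum>v\<in>V. card (inc E v)) \<le> card V" by simp
  thus ?thesis using handshake[OF s] by linarith
qed

lemma two_elems: assumes "card A \<ge> 2" shows "\<exists>x y. x \<in> A \<and> y \<in> A \<and> x \<noteq> y"
proof -
  have fA: "finite A" using assms card.infinite by fastforce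
  have "A \<noteq> {}" using assms by auto
  then obtain x where x: "x \<in> A" by blast
  have c1: "card (A - {x}) \<ge> 1" using assms x fA by simp
  have "A - {x} \<noteq> {}"
  proof
    assume "A - {x} = {}" with c1 show False by simp
  qed
  then obtain y where "y \<in> A - {x}" by blast
  thus ?thesis using x by blast
qed

lemma two_nbrs:
  assumes s: "sgraph V E" and c: "card (inc E w) \<ge> 2"
  shows "\<exists>x y. x \<noteq> y \<and> {w,x} \<in> E \<and> {w,y} \<in> E"
proof -
  have "card (nbr E w) \<ge> 2" using c card_inc[OF s] by simp
  then obtain x y where "x \<in> nbr E w" "y \<in> nbr E w" "x \<noteq> y"
    using two_elems by blast
  thus ?thesis unfolding nbr_def by blast
qed

lemma no_triangle:
  assumes b: "bipartite V E" and "{x,y} \<in> E" "{y,z} \<in> E" "{x,z} \<in> E"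
  shows False
proof -
  obtain A B where AB: "A \<inter> B = {}" "\<forall>e\<in>E. \<exists>u v. e = {u, v} \<and> u \<in> A \<and> v \<in> B"
    using b unfolding bipartite_def by blast
  have side: "(p \<in> A \<and> q \<in> B) \<or> (p \<in> B \<and> q \<in> A)" if pq: "{p,q} \<in> E" for p q
  proof -
    obtain u v where "{p,q} = {u,v}" "u \<in> A" "v \<in> B" using bspec[OF AB(2) pq] by (elim exE conjE)
    thus ?thesis by (auto simp: doubleton_eq_iff)
  qed
  have d: "t \<in> A \<Longrightarrow> t \<in> B \<Longrightarrow> False" for t using AB(1) by blast
  from side[OF assms(2)] side[OF assms(3)] side[OF assms(4)] d show False by blast
qed



lemma kP3_mono:
  assumes "contains_kP3 p W E'" "W \<subseteq> V" "E' \<subseteq> E"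
  shows "contains_kP3 p V E"
proof -
  obtain a b c where h1: "\<forall>i<p. a i \<in> W \<and> b i \<in> W \<and> c i \<in> W \<and> {a i, b i} \<in> E' \<and> {b i, c i} \<in> E'"
    and h2: "inj_on (\<lambda>(i, j). if j = (0::nat) then a i else if j = 1 then b i else c i) ({..<p} \<times> {0, 1, 2})"
    using assms(1) unfolding contains_kP3_def by (elim exE conjE)
  have "\<forall>i<p. a i \<in> V \<and> b i \<in> V \<and> c i \<in> V \<and> {a i, b i} \<in> E \<and> {b i, c i} \<in> E"
    using h1 assms(2,3) by blast
  with h2 show ?thesis unfolding contains_kP3_def by blast
qed

lemma kP3_zero: "contains_kP3 0 V E"
  unfolding contains_kP3_def by simp

lemma kP3_extend:
  assumes "contains_kP3 p W E" "W \<subseteq> V" "x \<in> V" "y \<in> V" "z \<in> V"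
    "x \<notin> W" "y \<notin> W" "z \<notin> W" "x \<noteq> y" "y \<noteq> z" "x \<noteq> z" "{x,y} \<in> E" "{y,z} \<in> E"
  shows "contains_kP3 (Suc p) V E"
proof -
  obtain a b c where h1: "\<forall>i<p. a i \<in> W \<and> b i \<in> W \<and> c i \<in> W \<and> {a i, b i} \<in> E \<and> {b i, c i} \<in> E"
    and h2: "inj_on (\<lambda>(i, j). if j = (0::nat) then a i else if j = 1 then b i else c i) ({..<p} \<times> {0, 1, 2})"
    using assms(1) unfolding contains_kP3_def by (elim exE conjE)
  define a' where "a' = a(p:=x)"
  define b' where "b' = b(p:=y)"
  define c' where "c' = c(p:=z)"
  define F where "F = (\<lambda>(i, j). if j = (0::nat) then a i else if j = 1 then b i else c i)"
  define F' where "F' = (\<lambda>(i, j). if j = (0::nat) then a' i else if j = 1 then b' i else c' i)"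
  have c1: "\<forall>i<Suc p. a' i \<in> V \<and> b' i \<in> V \<and> c' i \<in> V \<and> {a' i, b' i} \<in> E \<and> {b' i, c' i} \<in> E"
  proof (intro allI impI)
    fix i assume "i < Suc p"
    hence "i < p \<or> i = p" by auto
    thus "a' i \<in> V \<and> b' i \<in> V \<and> c' i \<in> V \<and> {a' i, b' i} \<in> E \<and> {b' i, c' i} \<in> E"
    proof
      assume ip: "i < p"
      hence "a' i = a i" "b' i = b i" "c' i = c i" unfolding a'_def b'_def c'_def by auto
      thus ?thesis using h1 ip assms(2) by auto
    next
      assume "i = p"
      thus ?thesis unfolding a'_def b'_def c'_def using assms by auto
    qed
  qed
  have old: "F' (i,j) = F (i,j)" if "i < p" for i j
    using that unfolding F'_def F_def a'_def b'_def c'_def by auto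
  have oldW: "F (i,j) \<in> W" if "i < p" for i j
    using that h1 unfolding F_def by auto
  have new0: "F' (p,0) = x" and new1: "F' (p,1) = y" and new2: "F' (p,2) = z"
    unfolding F'_def a'_def b'_def c'_def by auto
  have c2: "inj_on F' ({..<Suc p} \<times> {0, 1, 2})"
  proof (rule inj_onI)
    fix u u' assume u: "u \<in> {..<Suc p} \<times> {0, 1, 2}" and u': "u' \<in> {..<Suc p} \<times> {0, 1, 2}"
      and eq: "F' u = F' u'"
    obtain i j where ij: "u = (i,j)" by (cases u)
    obtain i' j' where ij': "u' = (i',j')" by (cases u')
    have i: "i < p \<or> i = p" and j: "j = 0 \<or> j = 1 \<or> j = 2" using u ij by auto
    have i': "i' < p \<or> i' = p" and j': "j' = 0 \<or> j' = 1 \<or> j' = 2" using u' ij' by auto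
    have newxyz: "F' (p,t) \<in> {x,y,z}" if "t = 0 \<or> t = 1 \<or> t = 2" for t
      using that new0 new1 new2 by auto
    have xyzW: "{x,y,z} \<inter> W = {}" using assms(6,7,8) by auto
    show "u = u'"
    proof (cases "i < p")
      case True
      show ?thesis
      proof (cases "i' < p")
        case True
        have "F (i,j) = F (i',j')" using eq ij ij' old \<open>i < p\<close> True by simp
        moreover have "(i,j) \<in> {..<p} \<times> {0, 1, 2}" "(i',j') \<in> {..<p} \<times> {0, 1, 2}"
          using \<open>i < p\<close> True j j' by auto
        ultimately show ?thesis using h2 ij ij' unfolding F_def inj_on_def by blast
      next
        case False
        hence "i' = p" using i' by simp
        have "F' u \<in> W" using ij old oldW \<open>i < p\<close> by simp
        moreover have "F' u' \<in> {x,y,z}" using ij' \<open>i' = p\<close> newxyz j' by simp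
        ultimately show ?thesis using eq xyzW by auto
      qed
    next
      case False
      hence "i = p" using i by simp
      show ?thesis
      proof (cases "i' < p")
        case True
        have "F' u' \<in> W" using ij' old oldW True by simp
        moreover have "F' u \<in> {x,y,z}" using ij \<open>i = p\<close> newxyz j by simp
        ultimately show ?thesis using eq xyzW by auto
      next
        case False
        hence "i' = p" using i' by simp
        show ?thesis using eq ij ij' \<open>i = p\<close> \<open>i' = p\<close> j j' new0 new1 new2 assms(9,10,11)
          by auto
      qed
    qed
  qed
  show ?thesis unfolding contains_kP3_def
    apply (rule exI[of _ a'], rule exI[of _ b'], rule exI[of _ c'])
    using c1 c2 unfolding F'_def by blast
qed

lemma kP3_pathset:
  assumes "contains_kP3 p V E"
  shows "\<exists>P. P \<subseteq> V \<and> finite P \<and> card P \<le> 3 * p \<and> contains_kP3 p P E"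
proof -
  obtain a b c where h1: "\<forall>i<p. a i \<in> V \<and> b i \<in> V \<and> c i \<in> V \<and> {a i, b i} \<in> E \<and> {b i, c i} \<in> E"
    and h2: "inj_on (\<lambda>(i, j). if j = (0::nat) then a i else if j = 1 then b i else c i) ({..<p} \<times> {0, 1, 2})"
    using assms(1) unfolding contains_kP3_def by (elim exE conjE)
  define F where "F = (\<lambda>(i, j). if j = (0::nat) then a i else if j = 1 then b i else c i)"
  define D where "D = ({..<p} \<times> {0::nat, 1, 2})"
  define P where "P = F ` D"
  have fD: "finite D" unfolding D_def by simp
  have cD: "card D = 3 * p" unfolding D_def by (simp add: card_cartesian_product)
  have "card P \<le> 3 * p" unfolding P_def using card_image_le[OF fD, of F] cD by simp
  moreover have "finite P" unfolding P_def using fD by simp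
  moreover have "P \<subseteq> V"
  proof
    fix t assume "t \<in> P"
    then obtain i j where "i < p" "j \<in> {0,1,2}" "t = F (i,j)" unfolding P_def D_def by auto
    thus "t \<in> V" using h1 unfolding F_def by auto
  qed
  moreover have "\<forall>i<p. a i \<in> P \<and> b i \<in> P \<and> c i \<in> P \<and> {a i, b i} \<in> E \<and> {b i, c i} \<in> E"
  proof (intro allI impI)
    fix i assume ip: "i < p"
    have "a i = F (i,0)" "b i = F (i,1)" "c i = F (i,2)" unfolding F_def by auto
    moreover have "(i,0) \<in> D" "(i,1) \<in> D" "(i,2) \<in> D" unfolding D_def using ip by auto
    ultimately have "a i \<in> P" "b i \<in> P" "c i \<in> P" unfolding P_def by auto
    thus "a i \<in> P \<and> b i \<in> P \<and> c i \<in> P \<and> {a i, b i} \<in> E \<and> {b i, c i} \<in> E" using h1 ip by auto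
  qed
  hence "contains_kP3 p P E" unfolding contains_kP3_def using h2 by blast
  ultimately show ?thesis by blast
qed

lemma find_step:
  assumes "Q 0" "\<not> Q (k::nat)"
  shows "\<exists>p<k. Q p \<and> \<not> Q (Suc p)"
  using assms
proof (induction k)
  case 0 thus ?case by simp
next
  case (Suc k)
  show ?case
  proof (cases "Q k")
    case True thus ?thesis using Suc.prems by auto
  next
    case False
    then obtain p where "p < k" "Q p" "\<not> Q (Suc p)" using Suc.IH Suc.prems by blast
    thus ?thesis by (intro exI[of _ p]) auto
  qed
qed

lemma sgraph_restrict:
  assumes s: "sgraph V E" and U: "U \<subseteq> V"
  shows "sgraph U {e\<in>E. e \<subseteq> U}"
  unfolding sgraph_def
proof (intro conjI ballI)
  show "finite U" using U sgraph_finV[OF s] finite_subset by blast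
next
  fix e assume "e \<in> {e\<in>E. e \<subseteq> U}"
  hence e: "e \<in> E" "e \<subseteq> U" by auto
  obtain u w where uw: "e = {u,w}" "u \<noteq> w" using sgraph_edge[OF s e(1)] by (elim exE conjE)
  hence "u \<in> U" "w \<in> U" using e(2) by auto
  with uw show "\<exists>u w. e = {u, w} \<and> u \<noteq> w \<and> u \<in> U \<and> w \<in> U" by blast
qed

lemma bip_restrict:
  assumes b: "bipartite V E" and U: "U \<subseteq> V"
  shows "bipartite U {e\<in>E. e \<subseteq> U}"
proof -
  obtain A B where AB: "A \<union> B = V" "A \<inter> B = {}" "\<forall>e\<in>E. \<exists>u v. e = {u, v} \<and> u \<in> A \<and> v \<in> B"
    using b unfolding bipartite_def by (elim exE conjE)
  have "(A \<inter> U) \<union> (B \<inter> U) = U" using AB(1) U by blast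
  moreover have "(A \<inter> U) \<inter> (B \<inter> U) = {}" using AB(2) by blast
  moreover have "\<forall>e\<in>{e\<in>E. e \<subseteq> U}. \<exists>u v. e = {u, v} \<and> u \<in> A \<inter> U \<and> v \<in> B \<inter> U"
  proof
    fix e assume "e \<in> {e\<in>E. e \<subseteq> U}"
    hence e: "e \<in> E" "e \<subseteq> U" by auto
    obtain u v where uv: "e = {u, v}" "u \<in> A" "v \<in> B" using bspec[OF AB(3) e(1)] by (elim exE conjE)
    hence "u \<in> U" "v \<in> U" using e(2) by auto
    with uv show "\<exists>u v. e = {u, v} \<and> u \<in> A \<inter> U \<and> v \<in> B \<inter> U" by blast
  qed
  ultimately show ?thesis unfolding bipartite_def by blast
qed

lemma deg1_outside:
  assumes s: "sgraph V E" and nc: "\<not> contains_kP3 (Suc p) V E" and cp: "contains_kP3 p P E"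
    and PV: "P \<subseteq> V" and w: "w \<in> V - P"
  shows "card (inc {e\<in>E. e \<subseteq> V - P} w) \<le> 1"
proof (rule ccontr)
  assume "\<not> ?thesis"
  hence "card (inc {e\<in>E. e \<subseteq> V - P} w) \<ge> 2" by simp
  then obtain x y where xy: "x \<noteq> y" "{w,x} \<in> {e\<in>E. e \<subseteq> V - P}" "{w,y} \<in> {e\<in>E. e \<subseteq> V - P}"
    using two_nbrs[OF sgraph_restrict[OF s, of "V - P"]] by blast
  have wx: "w \<noteq> x" using sgraph_noloop[OF s] xy(2) by blast
  have wy: "w \<noteq> y" using sgraph_noloop[OF s] xy(3) by blast
  have "contains_kP3 (Suc p) V E"
  proof (rule kP3_extend[OF cp PV, of x w y])
    show "{x,w} \<in> E" using xy(2) by (simp add: insert_commute)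
    show "{w,y} \<in> E" using xy(3) by simp
  qed (use xy wx wy w in auto)
  with nc show False by simp
qed



lemma arith_case2:
  fixes k n q e :: nat
  assumes k: "k \<ge> 3" and n: "n \<ge> 11 * k - 4" and q: "q \<le> 3 * (k - 1)"
    and e: "2 * e + q \<le> n + 2 * q * (3 * k - 2)"
  shows "e < (k - 1) * (n - k + 1)"
proof -
  define K where "K = int k"
  define N where "N = int n"
  define Q where "Q = int q"
  define Ei where "Ei = int e"
  have K3: "K \<ge> 3" using k K_def by simp
  have NK: "N \<ge> 11 * K - 4" using n k unfolding N_def K_def by linarith
  have "int (3*(k-1)) = 3*(int k - 1)" using k by (simp add: of_nat_diff)
  moreover have "int q \<le> int (3*(k-1))" using q by (simp only: of_nat_le_iff)
  ultimately have QK: "Q \<le> 3 * (K - 1)" unfolding Q_def K_def by simp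
  have QK2: "Q \<ge> 0" unfolding Q_def by simp
  have eI: "2 * Ei + Q \<le> N + 2 * Q * (3 * K - 2)"
  proof -
    have "int (2 * e + q) \<le> int (n + 2 * q * (3 * k - 2))" using e by linarith
    moreover have "int (3 * k - 2) = 3 * K - 2" using k unfolding K_def by linarith
    ultimately show ?thesis unfolding Ei_def Q_def N_def by simp
  qed
  have s1: "Q * (6 * K - 5) \<le> 3 * (K - 1) * (6 * K - 5)"
    by (rule mult_right_mono) (use QK QK2 K3 in auto)
  have s2: "(11 * K - 4) * (2 * K - 3) \<le> N * (2 * K - 3)"
    by (rule mult_right_mono) (use NK K3 in auto)
  have "3 * 1 \<le> K * (K - 2)" by (rule mult_mono) (use K3 in auto)
  hence s3: "K * (K - 2) \<ge> 3" by simp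
  have "2 * Ei < 2 * ((K - 1) * (N - K + 1))"
    using eI s1 s2 s3 by (simp add: algebra_simps)
  hence "Ei < (K - 1) * (N - K + 1)" by simp
  moreover have "int (k - 1) = K - 1" "int (n - k + 1) = N - K + 1"
    using k n unfolding K_def N_def by (simp_all add: of_nat_diff)
  hence "int ((k - 1) * (n - k + 1)) = (K - 1) * (N - K + 1)"
    by (simp only: of_nat_mult)
  ultimately show ?thesis unfolding Ei_def by linarith
qed

lemma arith_small:
  fixes a k n :: nat
  assumes "a \<le> k - 1" "2 * k \<le> n" "k \<ge> 2"
  shows "a * (n - a) \<le> (k - 1) * (n - k + 1)"
    and "a * (n - a) = (k - 1) * (n - k + 1) \<Longrightarrow> a = k - 1"
proof -
  define A where "A = int a"
  define K where "K = int (k - 1)"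
  define N where "N = int n"
  have h: "A \<le> K" "0 \<le> A" "2 * K + 2 \<le> N" using assms unfolding A_def K_def N_def by (simp_all add: of_nat_diff)
  have eq1: "int (a * (n - a)) = A * (N - A)" using assms unfolding A_def N_def by (simp add: of_nat_diff)
  have m: "int (n - k + 1) = N - K" using assms unfolding K_def N_def by (simp add: of_nat_diff)
  have eq2: "int ((k - 1) * (n - k + 1)) = K * (N - K)" unfolding of_nat_mult m K_def by simp
  have d: "K * (N - K) - A * (N - A) = (K - A) * (N - K - A)" by (simp add: algebra_simps)
  have "(K - A) * (N - K - A) \<ge> 0" using h by simp
  thus "a * (n - a) \<le> (k - 1) * (n - k + 1)" using eq1 eq2 d by linarith
  assume "a * (n - a) = (k - 1) * (n - k + 1)"
  hence "(K - A) * (N - K - A) = 0" using eq1 eq2 d by linarith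
  moreover have "N - K - A > 0" using h by linarith
  ultimately have "K = A" by simp
  thus "a = k - 1" unfolding K_def A_def by simp
qed



lemma lemmaA:
  assumes s: "sgraph V E" and nc: "\<not> contains_kP3 k V E" and v: "v \<in> V"
    and deg: "card (nbr E v) \<ge> 3 * k - 1" and k: "k \<ge> 1"
  shows "\<not> contains_kP3 (k - 1) (V - {v}) {e\<in>E. e \<subseteq> V - {v}}"
proof
  assume as: "contains_kP3 (k - 1) (V - {v}) {e\<in>E. e \<subseteq> V - {v}}"
  obtain P where P: "P \<subseteq> V - {v}" "finite P" "card P \<le> 3 * (k - 1)"
      "contains_kP3 (k - 1) P {e\<in>E. e \<subseteq> V - {v}}"
    using kP3_pathset[OF as] by blast
  have cP: "contains_kP3 (k - 1) P E" by (rule kP3_mono[OF P(4)]) auto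
  have "card (nbr E v) - card P \<le> card (nbr E v - P)" using P(2) by (rule diff_card_le_card_Diff)
  hence "card (nbr E v - P) \<ge> 2" using deg P(3) k by linarith
  then obtain x y where xy: "x \<in> nbr E v - P" "y \<in> nbr E v - P" "x \<noteq> y" using two_elems by blast
  have vn: "v \<notin> nbr E v" using v_notin_nbr[OF s] .
  have nV: "nbr E v \<subseteq> V" using nbr_sub[OF s] .
  have "contains_kP3 (Suc (k - 1)) V E"
  proof (rule kP3_extend[OF cP _ _ v, of x y])
    show "{x,v} \<in> E" using xy(1) unfolding nbr_def by (simp add: insert_commute)
    show "{v,y} \<in> E" using xy(2) unfolding nbr_def by simp
  qed (use xy vn nV P(1) in auto)
  with nc k show False by simp
qed

lemma split_vertex:
  assumes s: "sgraph V E" and v: "v \<in> V"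
  shows "card E = card (nbr E v) + card {e\<in>E. e \<subseteq> V - {v}}"
proof -
  have "E = inc E v \<union> {e\<in>E. e \<subseteq> V - {v}}"
    using sgraph_sub[OF s] unfolding inc_def by auto
  moreover have "inc E v \<inter> {e\<in>E. e \<subseteq> V - {v}} = {}" unfolding inc_def by auto
  moreover have "finite (inc E v)" using inc_fin[OF s] .
  moreover have "finite {e\<in>E. e \<subseteq> V - {v}}" using sgraph_finE[OF s] by simp
  ultimately have "card E = card (inc E v) + card {e\<in>E. e \<subseteq> V - {v}}"
    by (metis card_Un_disjoint)
  thus ?thesis using card_inc[OF s] by simp
qed

lemma split_set:
  assumes s: "sgraph V E" and P: "P \<subseteq> V"
  shows "card E \<le> card {e\<in>E. e \<subseteq> V - P} + (\<Sum>u\<in>P. card (inc E u))"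
proof -
  have fP: "finite P" using P sgraph_finV[OF s] finite_subset by blast
  have "E \<subseteq> {e\<in>E. e \<subseteq> V - P} \<union> (\<Union>u\<in>P. inc E u)"
    using sgraph_sub[OF s] unfolding inc_def by blast
  hence "card E \<le> card ({e\<in>E. e \<subseteq> V - P} \<union> (\<Union>u\<in>P. inc E u))"
    using sgraph_finE[OF s] inc_fin[OF s] fP by (intro card_mono) auto
  also have "\<dots> \<le> card {e\<in>E. e \<subseteq> V - P} + card (\<Union>u\<in>P. inc E u)" by (rule card_Un_le)
  also have "card (\<Union>u\<in>P. inc E u) \<le> (\<Sum>u\<in>P. card (inc E u))" by (rule card_UN_le[OF fP])
  finally show ?thesis by simp
qed

lemma deg_le_other:
  assumes s: "sgraph V E" and AB: "\<forall>e\<in>E. \<exists>u v. e = {u, v} \<and> u \<in> A \<and> v \<in> B" "A \<inter> B = {}"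
    and vA: "v \<in> A"
  shows "nbr E v \<subseteq> B"
proof
  fix x assume "x \<in> nbr E v"
  hence e: "{v,x} \<in> E" unfolding nbr_def by simp
  obtain u w where "{v,x} = {u,w}" "u \<in> A" "w \<in> B" using bspec[OF AB(1) e] by (elim exE conjE)
  thus "x \<in> B" using vA AB(2) by (auto simp: doubleton_eq_iff)
qed

lemma strict_step:
  fixes V :: "'a set"
  assumes IH: "\<And>(V'::'a set) E' n'. sgraph V' E' \<Longrightarrow> bipartite V' E' \<Longrightarrow> card V' = n' \<Longrightarrow>
      11 * (k - 1) - 4 \<le> n' \<Longrightarrow> \<not> contains_kP3 (k - 1) V' E' \<Longrightarrow>
      card E' \<le> (k - 1 - 1) * (n' - (k - 1) + 1)"
    and k: "k \<ge> 3" and s: "sgraph V E" and b: "bipartite V E" and n: "card V = n" "n \<ge> 11 * k - 4"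
    and nc: "\<not> contains_kP3 k V E"
    and AB: "A \<union> B = V" "A \<inter> B = {}" "\<forall>e\<in>E. \<exists>u v. e = {u, v} \<and> u \<in> A \<and> v \<in> B"
    and cA: "card A \<ge> k" and cB: "card B \<ge> k"
  shows "card E < (k - 1) * (n - k + 1)"
proof -
  have fV: "finite V" using sgraph_finV[OF s] .
  have fA: "finite A" "finite B" using AB(1) fV by auto
  have cAB: "card A + card B = n" using AB(1,2) fA n(1) by (metis card_Un_disjoint)
  have AB3': "\<forall>e\<in>E. \<exists>u v. e = {u, v} \<and> u \<in> B \<and> v \<in> A"
  proof
    fix e assume "e \<in> E"
    then obtain u v where "e = {u,v}" "u \<in> A" "v \<in> B" using AB(3) by (meson)
    thus "\<exists>u v. e = {u, v} \<and> u \<in> B \<and> v \<in> A" by (intro exI[of _ v] exI[of _ u]) (simp add: insert_commute)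
  qed
  have degb: "card (nbr E v) \<le> n - k" if vV: "v \<in> V" for v
  proof (cases "v \<in> A")
    case True
    hence "nbr E v \<subseteq> B" using deg_le_other[OF s AB(3) AB(2)] by blast
    hence "card (nbr E v) \<le> card B" using fA by (simp add: card_mono)
    thus ?thesis using cAB cA by linarith
  next
    case False
    hence "v \<in> B" using vV AB(1) by blast
    moreover have "B \<inter> A = {}" using AB(2) by blast
    ultimately have "nbr E v \<subseteq> A" using deg_le_other[OF s AB3'] by blast
    hence "card (nbr E v) \<le> card A" using fA by (simp add: card_mono)
    thus ?thesis using cAB cB by linarith
  qed
  show ?thesis
  proof (cases "\<exists>v\<in>V. card (nbr E v) \<ge> 3 * k - 1")
    case True
    then obtain v where v: "v \<in> V" "card (nbr E v) \<ge> 3 * k - 1" by blast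
    define E' where "E' = {e\<in>E. e \<subseteq> V - {v}}"
    have nc': "\<not> contains_kP3 (k - 1) (V - {v}) E'"
      unfolding E'_def using lemmaA[OF s nc v(1) v(2)] k by simp
    have s': "sgraph (V - {v}) E'" unfolding E'_def by (rule sgraph_restrict[OF s]) auto
    have b': "bipartite (V - {v}) E'" unfolding E'_def by (rule bip_restrict[OF b]) auto
    have cV': "card (V - {v}) = n - 1" using v(1) n(1) fV by simp
    have "11 * (k - 1) - 4 \<le> n - 1" using n(2) k by linarith
    hence IHa: "card E' \<le> (k - 1 - 1) * (n - 1 - (k - 1) + 1)" using IH[OF s' b' cV' _ nc'] by blast
    have eq: "n - 1 - (k - 1) + 1 = n - k + 1" using n(2) k by linarith
    have split: "card E = card (nbr E v) + card E'" unfolding E'_def by (rule split_vertex[OF s v(1)])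
    have "(k - 1) * (n - k + 1) = (k - 1 - 1) * (n - k + 1) + (n - k + 1)"
    proof -
      have "k - 1 = Suc (k - 1 - 1)" using k by linarith
      hence "(k - 1) * (n - k + 1) = Suc (k - 1 - 1) * (n - k + 1)" by simp
      thus ?thesis by simp
    qed
    moreover have IHb: "card E' \<le> (k - 1 - 1) * (n - k + 1)" using IHa eq by simp
    ultimately show ?thesis using split degb[OF v(1)] k n(2) by linarith
  next
    case False
    hence dlow: "card (nbr E v) \<le> 3 * k - 2" if "v \<in> V" for v using that by force
    have "\<exists>p<k. contains_kP3 p V E \<and> \<not> contains_kP3 (Suc p) V E"
      by (rule find_step[of "\<lambda>p. contains_kP3 p V E"]) (use kP3_zero nc in auto)
    then obtain p where p: "p < k" "contains_kP3 p V E" "\<not> contains_kP3 (Suc p) V E" by blast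
    obtain P where P: "P \<subseteq> V" "finite P" "card P \<le> 3 * p" "contains_kP3 p P E"
      using kP3_pathset[OF p(2)] by blast
    define ER where "ER = {e\<in>E. e \<subseteq> V - P}"
    have sR: "sgraph (V - P) ER" unfolding ER_def by (rule sgraph_restrict[OF s]) auto
    have d1: "card (inc ER w) \<le> 1" if "w \<in> V - P" for w
      unfolding ER_def by (rule deg1_outside[OF s p(3) P(4) P(1) that])
    have mb: "2 * card ER \<le> card (V - P)" by (rule matching_bound[OF sR d1])
    have cVP: "card (V - P) = n - card P" using P(1) P(2) n(1) fV by (simp add: card_Diff_subset)
    have sp: "card E \<le> card ER + (\<Sum>u\<in>P. card (inc E u))" unfolding ER_def by (rule split_set[OF s P(1)])
    have "(\<Sum>u\<in>P. card (inc E u)) \<le> (\<Sum>u\<in>P. 3 * k - 2)"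
    proof (rule sum_mono)
      fix u assume "u \<in> P"
      hence "u \<in> V" using P(1) by blast
      thus "card (inc E u) \<le> 3 * k - 2" using dlow card_inc[OF s] by simp
    qed
    hence "(\<Sum>u\<in>P. card (inc E u)) \<le> card P * (3 * k - 2)" by simp
    hence e2: "2 * card E + card P \<le> n + 2 * card P * (3 * k - 2)"
      using sp mb cVP P(1) card_mono[OF fV P(1)] n(1) by (simp add: algebra_simps)
    have "card P \<le> 3 * (k - 1)" using P(3) p(1) by linarith
    thus ?thesis using arith_case2[OF k n(2) _ e2] by blast
  qed
qed



lemma iso_from_bij:
  assumes g: "bij_betw g W V" and F: "\<forall>e\<in>F. e \<subseteq> W" and E: "E = (\<lambda>e. g ` e) ` F"
  shows "graph_iso V E W F"
proof -
  define f where "f = inv_into W g"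
  have bf: "bij_betw f V W" unfolding f_def by (rule bij_betw_inv_into[OF g])
  have ig: "inj_on g W" using bij_betw_imp_inj_on[OF g] .
  have gW: "g ` W = V" using bij_betw_imp_surj_on[OF g] .
  have fW: "f u \<in> W" if "u \<in> V" for u using bij_betwE[OF bf] that by blast
  have gf: "g (f u) = u" if "u \<in> V" for u unfolding f_def using that gW by (simp add: f_inv_into_f)
  have "\<forall>u\<in>V. \<forall>v\<in>V. {u, v} \<in> E \<longleftrightarrow> {f u, f v} \<in> F"
  proof (intro ballI iffI)
    fix u v assume uv: "u \<in> V" "v \<in> V"
    {
      assume h: "{f u, f v} \<in> F"
      have "{u, v} = g ` {f u, f v}" using gf uv by simp
      thus "{u, v} \<in> E" unfolding E by (rule rev_image_eqI[OF h])
    }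
    {
      assume "{u, v} \<in> E"
      then obtain e where e: "e \<in> F" "{u,v} = g ` e" unfolding E by (elim imageE)
      have eW: "e \<subseteq> W" using F e(1) by blast
      have "f ` {u,v} = e" unfolding e(2) f_def by (rule inv_into_image_cancel[OF ig eW])
      hence "e = {f u, f v}" by simp
      with e(1) show "{f u, f v} \<in> F" by simp
    }
  qed
  with bf show ?thesis unfolding graph_iso_def by (intro exI[of _ f] conjI)
qed

lemma iso_card:
  assumes iso: "graph_iso V E W F" and s: "sgraph V E"
    and F2: "\<forall>e\<in>F. \<exists>x y. e = {x,y} \<and> x \<in> W \<and> y \<in> W"
  shows "card E = card F"
proof -
  obtain f where bf: "bij_betw f V W" and H: "\<forall>u\<in>V. \<forall>v\<in>V. {u, v} \<in> E \<longleftrightarrow> {f u, f v} \<in> F"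
    using iso unfolding graph_iso_def by (elim exE conjE)
  have fV: "f ` V = W" using bij_betw_imp_surj_on[OF bf] .
  have "(\<lambda>e. f ` e) ` E = F"
  proof (rule set_eqI, rule iffI)
    fix e' assume "e' \<in> (\<lambda>e. f ` e) ` E"
    then obtain e where e: "e \<in> E" "e' = f ` e" by blast
    obtain u w where uw: "e = {u,w}" "u \<in> V" "w \<in> V" using sgraph_edge[OF s e(1)] by (elim exE conjE)
    have "{f u, f w} \<in> F" using H uw e(1) by blast
    thus "e' \<in> F" using e(2) uw(1) by simp
  next
    fix e' assume e': "e' \<in> F"
    obtain x y where xy: "e' = {x,y}" "x \<in> W" "y \<in> W" using bspec[OF F2 e'] by (elim exE conjE)
    obtain u where u: "u \<in> V" "x = f u" using xy(2) fV by blast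
    obtain w where w: "w \<in> V" "y = f w" using xy(3) fV by blast
    have "{f u, f w} \<in> F" using e' xy u w by simp
    hence "{u,w} \<in> E" using H u w by blast
    moreover have "e' = f ` {u,w}" using xy u w by simp
    ultimately show "e' \<in> (\<lambda>e. f ` e) ` E" by blast
  qed
  moreover have "inj_on (\<lambda>e. f ` e) E"
  proof -
    have "inj_on (\<lambda>e. f ` e) (Pow V)" using inj_on_image_Pow[OF bij_betw_imp_inj_on[OF bf]] .
    moreover have "E \<subseteq> Pow V" using sgraph_sub[OF s] by blast
    ultimately show ?thesis using inj_on_subset by blast
  qed
  ultimately show ?thesis using card_image by fastforce
qed

lemma K_edges_eq: "K_edges a b = (\<lambda>(i,j). {i,j}) ` ({..<a} \<times> {a..<a+b})"
proof (rule set_eqI, rule iffI)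
  fix x assume "x \<in> K_edges a b"
  then obtain i j where ij: "x = {i,j}" "i < a" "a \<le> j" "j < a + b" unfolding K_edges_def by blast
  show "x \<in> (\<lambda>(i,j). {i,j}) ` ({..<a} \<times> {a..<a+b})"
    by (rule image_eqI[of _ _ "(i,j)"]) (use ij in auto)
next
  fix x assume "x \<in> (\<lambda>(i,j). {i,j}) ` ({..<a} \<times> {a..<a+b})"
  then obtain i j where ij: "x = {i,j}" "i < a" "a \<le> j" "j < a + b" by auto
  thus "x \<in> K_edges a b" unfolding K_edges_def by blast
qed

lemma card_K: "card (K_edges a b) = a * b"
proof -
  have "inj_on (\<lambda>(i,j). {i,j}) ({..<a} \<times> {a..<a+b})"
  proof (rule inj_onI)
    fix u u' assume u: "u \<in> {..<a} \<times> {a..<a+b}" and u': "u' \<in> {..<a} \<times> {a..<a+b}"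
      and eq: "(\<lambda>(i,j). {i,j}) u = (\<lambda>(i,j). {i,j}) u'"
    obtain i j where ij: "u = (i,j)" by (cases u)
    obtain i' j' where ij': "u' = (i',j')" by (cases u')
    have "{i,j} = {i',j'}" using eq ij ij' by simp
    moreover have "i < a" "a \<le> j" "i' < a" "a \<le> j'" using u u' ij ij' by auto
    ultimately have "i = i' \<and> j = j'" by (auto simp: doubleton_eq_iff)
    thus "u = u'" using ij ij' by simp
  qed
  thus ?thesis unfolding K_edges_eq by (simp add: card_image card_cartesian_product)
qed

lemma K_edges_in: "\<forall>e\<in>K_edges a b. \<exists>x y. e = {x,y} \<and> x \<in> K_verts a b \<and> y \<in> K_verts a b"
proof
  fix e assume "e \<in> K_edges a b"
  then obtain i j where ij: "e = {i,j}" "i < a" "a \<le> j" "j < a + b" unfolding K_edges_def by blast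
  show "\<exists>x y. e = {x,y} \<and> x \<in> K_verts a b \<and> y \<in> K_verts a b"
    by (rule exI[of _ i], rule exI[of _ j]) (use ij in \<open>auto simp: K_verts_def\<close>)
qed

lemma K_edges_sub: "\<forall>e\<in>K_edges a b. e \<subseteq> K_verts a b"
proof
  fix e assume e: "e \<in> K_edges a b"
  obtain x y where "e = {x,y}" "x \<in> K_verts a b" "y \<in> K_verts a b" using bspec[OF K_edges_in e] by (elim exE conjE)
  thus "e \<subseteq> K_verts a b" by simp
qed

lemma T_edges_eq: "T_edges n s = (\<lambda>i. {0,i}) ` {1..s} \<union> (\<lambda>i. {i,s+i}) ` {1..s} \<union> (\<lambda>j. {0,j}) ` {2*s+1..<n}"
proof -
  have "{{0, i} | i. 1 \<le> i \<and> i \<le> s} = (\<lambda>i. {0,i}) ` {1..s}" by auto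
  moreover have "{{i, s + i} | i. 1 \<le> i \<and> i \<le> s} = (\<lambda>i. {i,s+i}) ` {1..s}" by auto
  moreover have "{{0, j} | j. 2 * s + 1 \<le> j \<and> j < n} = (\<lambda>j. {0,j}) ` {2*s+1..<n}" by auto
  ultimately show ?thesis unfolding T_edges_def by simp
qed

lemma card_T:
  assumes "2 * s + 1 \<le> n"
  shows "card (T_edges n s) = n - 1"
proof -
  have i1: "inj_on (\<lambda>i. {0::nat,i}) X" for X by (rule inj_onI) (auto simp: doubleton_eq_iff)
  have i2: "inj_on (\<lambda>i. {i,s+i}) {1..s}" by (rule inj_onI) (auto simp: doubleton_eq_iff)
  have c1: "card ((\<lambda>i. {0::nat,i}) ` {1..s}) = s" using i1 by (simp add: card_image)
  have c2: "card ((\<lambda>i. {i,s+i}) ` {1..s}) = s" using i2 by (simp add: card_image)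
  have c3: "card ((\<lambda>j. {0::nat,j}) ` {2*s+1..<n}) = n - (2*s+1)" using i1 by (simp add: card_image)
  have d12: "(\<lambda>i. {0::nat,i}) ` {1..s} \<inter> (\<lambda>i. {i,s+i}) ` {1..s} = {}"
    by (auto simp: doubleton_eq_iff)
  have d3: "((\<lambda>i. {0::nat,i}) ` {1..s} \<union> (\<lambda>i. {i,s+i}) ` {1..s}) \<inter> (\<lambda>j. {0,j}) ` {2*s+1..<n} = {}"
    by (auto simp: doubleton_eq_iff)
  have "card (T_edges n s) = card ((\<lambda>i. {0::nat,i}) ` {1..s} \<union> (\<lambda>i. {i,s+i}) ` {1..s}) + card ((\<lambda>j. {0::nat,j}) ` {2*s+1..<n})"
    unfolding T_edges_eq by (rule card_Un_disjoint) (use d3 in auto)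
  also have "card ((\<lambda>i. {0::nat,i}) ` {1..s} \<union> (\<lambda>i. {i,s+i}) ` {1..s}) = s + s"
    using c1 c2 d12 by (subst card_Un_disjoint) auto
  finally show ?thesis using c3 assms by simp
qed

lemma T_edges_in:
  assumes "2 * s + 1 \<le> n"
  shows "\<forall>e\<in>T_edges n s. \<exists>x y. e = {x,y} \<and> x \<in> T_verts n \<and> y \<in> T_verts n"
proof
  fix e assume "e \<in> T_edges n s"
  hence "e \<in> (\<lambda>i. {0,i}) ` {1..s} \<or> e \<in> (\<lambda>i. {i,s+i}) ` {1..s} \<or> e \<in> (\<lambda>j. {0,j}) ` {2*s+1..<n}"
    unfolding T_edges_eq by blast
  then obtain x y where "e = {x,y}" "x < n" "y < n"
  proof (elim disjE imageE)
    fix i assume "i \<in> {1..s}" "e = {0,i}" "\<And>x y. e = {x, y} \<Longrightarrow> x < n \<Longrightarrow> y < n \<Longrightarrow> thesis"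
    thus thesis using assms by auto
  next
    fix i assume "i \<in> {1..s}" "e = {i,s+i}" "\<And>x y. e = {x, y} \<Longrightarrow> x < n \<Longrightarrow> y < n \<Longrightarrow> thesis"
    thus thesis using assms by auto
  next
    fix i assume "i \<in> {2*s+1..<n}" "e = {0,i}" "\<And>x y. e = {x, y} \<Longrightarrow> x < n \<Longrightarrow> y < n \<Longrightarrow> thesis"
    thus thesis using assms by auto
  qed
  thus "\<exists>x y. e = {x,y} \<and> x \<in> T_verts n \<and> y \<in> T_verts n" unfolding T_verts_def by blast
qed

lemma T_edges_sub:
  assumes "2 * s + 1 \<le> n"
  shows "\<forall>e\<in>T_edges n s. e \<subseteq> T_verts n"
proof
  fix e assume e: "e \<in> T_edges n s"
  obtain x y where "e = {x,y}" "x \<in> T_verts n" "y \<in> T_verts n" using bspec[OF T_edges_in[OF assms] e] by (elim exE conjE)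
  thus "e \<subseteq> T_verts n" by simp
qed



lemma bij_two:
  fixes a b :: nat
  assumes hA: "bij_betw hA {0..<a} A" and hB: "bij_betw hB {0..<b} B" and AB: "A \<inter> B = {}"
    and fA: "finite A" and fB: "finite B"
  defines "g \<equiv> (\<lambda>i. if i < a then hA i else hB (i - a))"
  shows "bij_betw g {..<a+b} (A \<union> B)" and "\<And>i. i < a \<Longrightarrow> g i = hA i"
    and "\<And>j. j < b \<Longrightarrow> g (a + j) = hB j"
proof -
  show gA: "\<And>i. i < a \<Longrightarrow> g i = hA i" unfolding g_def by simp
  show gB: "\<And>j. j < b \<Longrightarrow> g (a + j) = hB j" unfolding g_def by simp
  have ca: "card A = a" using bij_betw_same_card[OF hA] by simp
  have cb: "card B = b" using bij_betw_same_card[OF hB] by simp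
  have img: "g ` {..<a+b} = A \<union> B"
  proof (rule set_eqI, rule iffI)
    fix x assume "x \<in> g ` {..<a+b}"
    then obtain i where i: "i < a + b" "x = g i" by auto
    show "x \<in> A \<union> B"
    proof (cases "i < a")
      case True
      hence "x = hA i" using i gA by simp
      moreover have "hA i \<in> A" using bij_betwE[OF hA] True by simp
      ultimately show ?thesis by simp
    next
      case False
      hence "x = hB (i - a)" using i unfolding g_def by simp
      moreover have "hB (i - a) \<in> B" using bij_betwE[OF hB] False i(1) by simp
      ultimately show ?thesis by simp
    qed
  next
    fix x assume "x \<in> A \<union> B"
    thus "x \<in> g ` {..<a+b}"
    proof
      assume "x \<in> A"
      then obtain i where "i \<in> {0..<a}" "x = hA i" using bij_betw_imp_surj_on[OF hA] by (metis imageE)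
      thus ?thesis using gA by (intro image_eqI[of _ _ i]) auto
    next
      assume "x \<in> B"
      then obtain j where "j \<in> {0..<b}" "x = hB j" using bij_betw_imp_surj_on[OF hB] by (metis imageE)
      thus ?thesis using gB by (intro image_eqI[of _ _ "a + j"]) auto
    qed
  qed
  have "card (g ` {..<a+b}) = card {..<a+b}" unfolding img using AB fA fB ca cb by (simp add: card_Un_disjoint)
  hence "inj_on g {..<a+b}" by (rule eq_card_imp_inj_on[rotated]) simp
  thus "bij_betw g {..<a+b} (A \<union> B)" using img unfolding bij_betw_def by simp
qed

lemma small_part:
  fixes V :: "'a set"
  assumes s: "sgraph V E" and AB: "A \<union> B = V" "A \<inter> B = {}" "\<forall>e\<in>E. \<exists>u v. e = {u, v} \<and> u \<in> A \<and> v \<in> B"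
    and n: "card V = n" and cA: "card A \<le> k - 1" and k: "k \<ge> 2" and nk: "2 * k \<le> n"
  shows "card E \<le> (k - 1) * (n - k + 1)"
    and "card E = (k - 1) * (n - k + 1) \<Longrightarrow> graph_iso V E (K_verts (k - 1) (n - k + 1)) (K_edges (k - 1) (n - k + 1))"
proof -
  have fV: "finite V" using sgraph_finV[OF s] .
  have fA: "finite A" "finite B" using AB(1) fV by auto
  define a where "a = card A"
  define b where "b = card B"
  have ab: "a + b = n" unfolding a_def b_def using AB(1,2) fA n by (metis card_Un_disjoint)
  define G where "G = (\<lambda>(u,v). {u,v}) ` (A \<times> B)"
  have EG: "E \<subseteq> G"
  proof
    fix e assume e: "e \<in> E"
    obtain u v where uv: "e = {u, v}" "u \<in> A" "v \<in> B" using bspec[OF AB(3) e] by (elim exE conjE)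
    show "e \<in> G" unfolding G_def by (rule image_eqI[of _ _ "(u,v)"]) (use uv in auto)
  qed
  have fG: "finite G" unfolding G_def using fA by simp
  have cG: "card G \<le> a * b" unfolding G_def a_def b_def
    using card_image_le[of "A \<times> B" "\<lambda>(u,v). {u,v}"] fA by (simp add: card_cartesian_product)
  have cEG: "card E \<le> card G" using card_mono[OF fG EG] .
  have bn: "b = n - a" using ab by simp
  have ar: "a * (n - a) \<le> (k - 1) * (n - k + 1)" using arith_small(1)[of a k n] cA k nk a_def by simp
  show "card E \<le> (k - 1) * (n - k + 1)" using cEG cG ar bn by simp
  assume eq: "card E = (k - 1) * (n - k + 1)"
  have "a * (n - a) = (k - 1) * (n - k + 1)" using cEG cG ar bn eq by simp
  hence ak: "a = k - 1" using arith_small(2)[of a k n] cA k nk a_def by simp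
  have bk: "b = n - k + 1" using bn ak k nk by simp
  have EGeq: "E = G" using card_subset_eq[OF fG EG] cEG cG ar bn eq by simp
  obtain hA where hA: "bij_betw hA {0..<a} A" using ex_bij_betw_nat_finite[OF fA(1)] a_def by blast
  obtain hB where hB: "bij_betw hB {0..<b} B" using ex_bij_betw_nat_finite[OF fA(2)] b_def by blast
  define g where "g = (\<lambda>i. if i < a then hA i else hB (i - a))"
  have bg: "bij_betw g {..<a+b} (A \<union> B)"
    unfolding g_def by (rule bij_two(1)[OF hA hB AB(2) fA(1) fA(2)])
  have gA: "\<And>i. i < a \<Longrightarrow> g i = hA i" unfolding g_def by simp
  have gB: "\<And>j. j < b \<Longrightarrow> g (a + j) = hB j" unfolding g_def by simp
  have Eeq: "E = (\<lambda>e. g ` e) ` K_edges a b"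
  proof (rule set_eqI, rule iffI)
    fix e assume "e \<in> E"
    hence "e \<in> G" using EGeq by simp
    then obtain u v where uv: "e = {u,v}" "u \<in> A" "v \<in> B" unfolding G_def by auto
    obtain i where i: "i \<in> {0..<a}" "u = hA i" using uv(2) bij_betw_imp_surj_on[OF hA] by (metis imageE)
    obtain j where j: "j \<in> {0..<b}" "v = hB j" using uv(3) bij_betw_imp_surj_on[OF hB] by (metis imageE)
    have "{i, a + j} \<in> K_edges a b" unfolding K_edges_def using i j
      by (intro CollectI exI[of _ i] exI[of _ "a + j"]) auto
    moreover have "e = g ` {i, a + j}" using uv i j gA gB by simp
    ultimately show "e \<in> (\<lambda>e. g ` e) ` K_edges a b" by (intro image_eqI[of _ _ "{i, a+j}"])
  next
    fix e assume "e \<in> (\<lambda>e. g ` e) ` K_edges a b"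
    then obtain e' where e': "e' \<in> K_edges a b" "e = g ` e'" by (elim imageE)
    then obtain i j where ij: "e' = {i,j}" "i < a" "a \<le> j" "j < a + b" unfolding K_edges_def by blast
    have "g i = hA i" using gA ij by simp
    moreover have "g j = hB (j - a)" using gB[of "j - a"] ij by simp
    moreover have "hA i \<in> A" using bij_betwE[OF hA] ij by simp
    moreover have "hB (j - a) \<in> B" using bij_betwE[OF hB] ij by simp
    ultimately have "e \<in> G" unfolding G_def using e'(2) ij(1) by (intro image_eqI[of _ _ "(hA i, hB (j - a))"]) auto
    thus "e \<in> E" using EGeq by simp
  qed
  have bgK: "bij_betw g (K_verts a b) V" unfolding K_verts_def using bg AB(1) by simp
  have "graph_iso V E (K_verts a b) (K_edges a b)"
    by (rule iso_from_bij[OF bgK K_edges_sub Eeq])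
  thus "graph_iso V E (K_verts (k - 1) (n - k + 1)) (K_edges (k - 1) (n - k + 1))" using ak bk by simp
qed



lemma k2_low:
  fixes V :: "'a set"
  assumes s: "sgraph V E" and bp: "bipartite V E" and n: "card V = n" and n18: "n \<ge> 18"
    and nc: "\<not> contains_kP3 2 V E" and low: "\<forall>v\<in>V. card (nbr E v) \<le> 4"
  shows "card E < n - 1"
proof (cases "\<forall>w\<in>V. card (inc E w) \<le> 1")
  case True
  hence "2 * card E \<le> card V" using matching_bound[OF s] by blast
  thus ?thesis using n n18 by linarith
next
  case False
  then obtain b where bV: "b \<in> V" and "\<not> card (inc E b) \<le> 1" by blast
  hence "card (inc E b) \<ge> 2" by simp
  then obtain a c where ac: "a \<noteq> c" "{b,a} \<in> E" "{b,c} \<in> E" using two_nbrs[OF s] by blast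
  have ab: "a \<noteq> b" using sgraph_noloop[OF s ac(2)] by simp
  have cb: "c \<noteq> b" using sgraph_noloop[OF s ac(3)] by simp
  have aV: "a \<in> V" and cV: "c \<in> V" using sgraph_in[OF s ac(2)] sgraph_in[OF s ac(3)] by auto
  have ab': "{a,b} \<in> E" using ac(2) by (simp add: insert_commute)
  define Q where "Q = {a,b,c}"
  have QV: "Q \<subseteq> V" unfolding Q_def using aV bV cV by auto
  have c1: "contains_kP3 1 Q E"
  proof -
    have "contains_kP3 (Suc 0) Q E"
      by (rule kP3_extend[OF kP3_zero[of "{}" E], of Q a b c]) (use ab ac cb ab' in \<open>auto simp: Q_def\<close>)
    thus ?thesis by simp
  qed
  have nc2: "\<not> contains_kP3 (Suc 1) V E" using nc by (simp add: numeral_2_eq_2)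
  define ER where "ER = {e\<in>E. e \<subseteq> V - Q}"
  have sR: "sgraph (V - Q) ER" unfolding ER_def by (rule sgraph_restrict[OF s]) auto
  have d1: "card (inc ER w) \<le> 1" if "w \<in> V - Q" for w
    unfolding ER_def by (rule deg1_outside[OF s nc2 c1 QV that])
  have fV: "finite V" using sgraph_finV[OF s] .
  have fQ: "finite Q" unfolding Q_def by simp
  have cQ: "card Q = 3" unfolding Q_def using ab ac(1) cb by auto
  have cVQ: "card (V - Q) = n - 3" using QV fQ n cQ by (simp add: card_Diff_subset)
  have deg: "card (inc E u) \<le> 4" if "u \<in> V" for u using low that card_inc[OF s] by simp
  have fin: "finite (inc E u)" for u using inc_fin[OF s] .
  have abinc: "{a,b} \<in> inc E a" "{a,b} \<in> inc E b" unfolding inc_def using ab' by auto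
  have bcinc: "{b,c} \<in> inc E c" "{b,c} \<in> inc E b" unfolding inc_def using ac(3) by auto
  have Esub: "E \<subseteq> ER \<union> inc E b \<union> (inc E a - {{a,b}}) \<union> (inc E c - {{b,c}})"
  proof
    fix e assume e: "e \<in> E"
    show "e \<in> ER \<union> inc E b \<union> (inc E a - {{a,b}}) \<union> (inc E c - {{b,c}})"
    proof (cases "e \<subseteq> V - Q")
      case True thus ?thesis unfolding ER_def using e by blast
    next
      case False
      hence "a \<in> e \<or> b \<in> e \<or> c \<in> e" using sgraph_sub[OF s e] unfolding Q_def by blast
      thus ?thesis using e abinc bcinc unfolding inc_def by blast
    qed
  qed
  have fER: "finite ER" unfolding ER_def using sgraph_finE[OF s] by simp
  have "card E \<le> card (ER \<union> inc E b \<union> (inc E a - {{a,b}}) \<union> (inc E c - {{b,c}}))"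
    by (rule card_mono[OF _ Esub]) (use fER fin in auto)
  also have "\<dots> \<le> card ER + card (inc E b) + card (inc E a - {{a,b}}) + card (inc E c - {{b,c}})"
    by (meson card_Un_le add_mono order_trans le_refl)
  also have "card (inc E a - {{a,b}}) = card (inc E a) - 1" using abinc fin by simp
  also have "card (inc E c - {{b,c}}) = card (inc E c) - 1" using bcinc fin by simp
  finally have cE: "card E \<le> card ER + card (inc E b) + (card (inc E a) - 1) + (card (inc E c) - 1)" .
  have pa: "card (inc E a) \<ge> 1" "card (inc E c) \<ge> 1"
    using abinc(1) bcinc(1) fin by (metis One_nat_def Suc_leI card_gt_0_iff empty_iff)+
  have hs: "(\<Sum>w\<in>V - Q. card (inc ER w)) = 2 * card ER" by (rule handshake[OF sR])
  show ?thesis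
  proof (cases "card (inc E a) + card (inc E b) + card (inc E c) \<le> 11")
    case True
    have "2 * card ER \<le> n - 3" using matching_bound[OF sR d1] cVQ by simp
    thus ?thesis using cE True pa n18 by linarith
  next
    case False
    hence four: "card (inc E a) = 4" "card (inc E b) = 4" "card (inc E c) = 4"
      using deg[OF aV] deg[OF bV] deg[OF cV] by linarith+
    have nb4: "card (nbr E b) = 4" using four(2) card_inc[OF s] by simp
    have acn: "a \<in> nbr E b" "c \<in> nbr E b" unfolding nbr_def using ac by auto
    have fnb: "finite (nbr E b)" using nbr_fin[OF s] .
    have "card (nbr E b - {a,c}) = 2" using nb4 acn ac(1) fnb by (simp add: card_Diff_subset)
    then obtain y1 y2 where y12: "y1 \<in> nbr E b - {a,c}" "y2 \<in> nbr E b - {a,c}" "y1 \<noteq> y2"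
      using two_elems[of "nbr E b - {a,c}"] by auto
    have yprop: "y \<in> V - Q \<and> {b,y} \<in> E" if y: "y \<in> nbr E b - {a,c}" for y
    proof -
      have "{b,y} \<in> E" using y unfolding nbr_def by simp
      moreover have "y \<noteq> b" using v_notin_nbr[OF s, of b] y by auto
      moreover have "y \<in> V" using nbr_sub[OF s] y by auto
      ultimately show ?thesis using y unfolding Q_def by auto
    qed
    have zero: "card (inc ER y) = 0" if y: "y \<in> nbr E b - {a,c}" for y
    proof (rule ccontr)
      assume "card (inc ER y) \<noteq> 0"
      hence "inc ER y \<noteq> {}" by auto
      then obtain e where e: "e \<in> ER" "y \<in> e" unfolding inc_def by auto
      obtain u w where uw: "e = {u,w}" "u \<noteq> w" using sgraph_edge[OF sR e(1)] by (elim exE conjE)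
      obtain z where z: "e = {y,z}" "z \<noteq> y"
      proof (cases "y = u")
        case True thus ?thesis using that uw by simp
      next
        case False hence yw: "y = w" using e(2) uw by simp
        show ?thesis by (rule that[of u]) (use uw yw in \<open>auto simp: insert_commute\<close>)
      qed
      have zVQ: "z \<in> V - Q" using e(1) z(1) unfolding ER_def by auto
      have yz: "{y,z} \<in> E" using e(1) z(1) unfolding ER_def by simp
      have yy: "y \<in> V - Q" "{b,y} \<in> E" using yprop[OF y] by auto
      have yna: "y \<notin> nbr E a"
      proof
        assume "y \<in> nbr E a"
        hence "{a,y} \<in> E" unfolding nbr_def by simp
        thus False using no_triangle[OF bp ab' yy(2)] by simp
      qed
      have na4: "card (nbr E a) = 4" using four(1) card_inc[OF s] by simp
      have fna: "finite (nbr E a)" using nbr_fin[OF s] .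
      have "card (nbr E a) - card {b,z} \<le> card (nbr E a - {b,z})" by (rule diff_card_le_card_Diff) simp
      moreover have "card {b,z} \<le> 2" by (simp add: card_insert_le_m1)
      ultimately have "card (nbr E a - {b,z}) \<ge> 2" using na4 by linarith
      then obtain w1 w2 where w: "w1 \<in> nbr E a - {b,z}" "w2 \<in> nbr E a - {b,z}" "w1 \<noteq> w2"
        using two_elems by blast
      have wV: "w1 \<in> V" "w2 \<in> V" using w nbr_sub[OF s] by auto
      have wa: "w1 \<noteq> a" "w2 \<noteq> a" using w v_notin_nbr[OF s, of a] by auto
      have wy: "w1 \<noteq> y" "w2 \<noteq> y" using w yna by auto
      have we: "{w1,a} \<in> E" "{a,w2} \<in> E" using w unfolding nbr_def by (auto simp: insert_commute)
      have yb: "y \<noteq> b" "z \<noteq> b" "a \<noteq> z" "a \<noteq> y" using yy zVQ unfolding Q_def by auto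
      have cz: "contains_kP3 1 {z,y,b} E"
      proof -
        have "contains_kP3 (Suc 0) {z,y,b} E"
          by (rule kP3_extend[OF kP3_zero[of "{}" E], of "{z,y,b}" z y b])
             (use z yb yz yy in \<open>auto simp: insert_commute\<close>)
        thus ?thesis by simp
      qed
      have "contains_kP3 (Suc 1) V E"
        by (rule kP3_extend[OF cz, of V w1 a w2]) (use w wV wa wy we yb yy zVQ aV bV ab in auto)
      with nc2 show False by simp
    qed
    have y12V: "{y1,y2} \<subseteq> V - Q" using yprop y12 by auto
    have fVQ: "finite (V - Q)" using fV by simp
    have "(\<Sum>w\<in>V - Q. card (inc ER w)) = (\<Sum>w\<in>(V - Q) - {y1,y2}. card (inc ER w)) + (\<Sum>w\<in>{y1,y2}. card (inc ER w))"
      using sum.subset_diff[OF y12V fVQ] by simp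
    also have "(\<Sum>w\<in>{y1,y2}. card (inc ER w)) = 0" using zero y12 by simp
    also have "(\<Sum>w\<in>(V - Q) - {y1,y2}. card (inc ER w)) \<le> (\<Sum>w\<in>(V - Q) - {y1,y2}. 1)"
      by (rule sum_mono) (use d1 in auto)
    also have "\<dots> = card (V - Q) - 2" using y12V y12(3) fVQ by (simp add: card_Diff_subset)
    finally have "2 * card ER \<le> n - 5" using hs cVQ by simp
    thus ?thesis using cE four n18 by linarith
  qed
qed



lemma k2_high:
  fixes V :: "'a set"
  assumes s: "sgraph V E" and bp: "bipartite V E" and n: "card V = n"
    and nc: "\<not> contains_kP3 2 V E" and v: "v \<in> V" and dv: "card (nbr E v) \<ge> 5"
  shows "card E \<le> n - 1"
    and "card E = n - 1 \<Longrightarrow> \<exists>s\<le>(n - 1) div 2. graph_iso V E (T_verts n) (T_edges n s)"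
proof -
  define V' where "V' = V - {v}"
  define Ev where "Ev = {e\<in>E. e \<subseteq> V'}"
  define N where "N = nbr E v"
  define Ou where "Ou = V' - N"
  have fV: "finite V" using sgraph_finV[OF s] .
  have fV': "finite V'" unfolding V'_def using fV by simp
  have fOu: "finite Ou" unfolding Ou_def using fV' by simp
  have fN: "finite N" unfolding N_def using nbr_fin[OF s] .
  have ncEv: "\<not> contains_kP3 (Suc 0) V' Ev"
    using lemmaA[OF s nc v, of] dv unfolding Ev_def V'_def by simp
  have sEv: "sgraph V' Ev" unfolding Ev_def V'_def by (rule sgraph_restrict[OF s]) auto
  have EvE: "Ev \<subseteq> E" unfolding Ev_def by auto
  have d1: "card (inc Ev w) \<le> 1" if "w \<in> V'" for w
  proof -
    have "card (inc {e\<in>Ev. e \<subseteq> V' - {}} w) \<le> 1"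
      by (rule deg1_outside[OF sEv ncEv kP3_zero]) (use that in auto)
    moreover have "{e\<in>Ev. e \<subseteq> V' - {}} = Ev" unfolding Ev_def by auto
    ultimately show ?thesis by simp
  qed
  have uniq: "e1 = e2" if "w \<in> V'" "e1 \<in> Ev" "e2 \<in> Ev" "w \<in> e1" "w \<in> e2" for w e1 e2
  proof -
    have "e1 \<in> inc Ev w" "e2 \<in> inc Ev w" unfolding inc_def using that by auto
    moreover have "finite (inc Ev w)" using inc_fin[OF sEv] .
    ultimately show ?thesis using d1[OF that(1)] card_le_Suc0_iff_eq by (metis One_nat_def)
  qed
  have NV': "N \<subseteq> V'" unfolding N_def V'_def using nbr_sub[OF s] v_notin_nbr[OF s, of v] by auto
  have NO: "N \<inter> Ou = {}" unfolding Ou_def by auto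
  have hasO: "\<exists>w. w \<in> e \<and> w \<in> Ou" if e: "e \<in> Ev" for e
  proof -
    obtain x y where xy: "e = {x,y}" "x \<in> V'" "y \<in> V'" using sgraph_edge[OF sEv e] by (elim exE conjE)
    have "\<not> (x \<in> N \<and> y \<in> N)"
    proof
      assume "x \<in> N \<and> y \<in> N"
      hence "{v,x} \<in> E" "{v,y} \<in> E" unfolding N_def nbr_def by auto
      moreover have "{x,y} \<in> E" using e xy EvE by auto
      ultimately show False using no_triangle[OF bp, of v x y] by simp
    qed
    thus ?thesis using xy unfolding Ou_def by auto
  qed
  define phi where "phi = (\<lambda>e. SOME w. w \<in> e \<and> w \<in> Ou)"
  have phi: "phi e \<in> e \<and> phi e \<in> Ou" if "e \<in> Ev" for e
    unfolding phi_def using someI_ex[OF hasO[OF that]] .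
  have OV': "Ou \<subseteq> V'" unfolding Ou_def by auto
  have iphi: "inj_on phi Ev"
  proof (rule inj_onI)
    fix e1 e2 assume ee: "e1 \<in> Ev" "e2 \<in> Ev" "phi e1 = phi e2"
    have h: "phi e1 \<in> e1" "phi e1 \<in> Ou" using phi[OF ee(1)] by auto
    have h2: "phi e1 \<in> e2" using phi[OF ee(2)] ee(3) by simp
    show "e1 = e2" by (rule uniq[OF _ ee(1) ee(2) h(1) h2]) (use h OV' in auto)
  qed
  have cEvO: "card Ev \<le> card Ou" by (rule card_inj_on_le[OF iphi _ fOu]) (use phi in auto)
  have cV': "card V' = n - 1" unfolding V'_def using v n fV by simp
  have cNO: "card N + card Ou = n - 1" unfolding Ou_def using NV' fV' cV' card_mono[OF fV' NV']
    by (simp add: card_Diff_subset[OF fN NV'])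
  have split: "card E = card N + card Ev" unfolding N_def Ev_def V'_def by (rule split_vertex[OF s v])
  show "card E \<le> n - 1" using split cEvO cNO by linarith
  assume eqE: "card E = n - 1"
  have cEv: "card Ev = card Ou" using eqE split cNO by linarith
  have phiO: "phi ` Ev = Ou"
    by (rule card_subset_eq[OF fOu]) (use phi card_image[OF iphi] cEv in auto)
  have oneO: "x = y" if hh: "e \<in> Ev" "x \<in> e" "y \<in> e" "x \<in> Ou" "y \<in> Ou" for e x y
  proof -
    obtain e1 where e1: "e1 \<in> Ev" "x = phi e1" using hh(4) phiO by blast
    obtain e2 where e2: "e2 \<in> Ev" "y = phi e2" using hh(5) phiO by blast
    have "e1 = e" using uniq[of x e1 e] e1 hh phi[OF e1(1)] OV' by auto
    moreover have "e2 = e" using uniq[of y e2 e] e2 hh phi[OF e2(1)] OV' by auto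
    ultimately show ?thesis using e1 e2 by simp
  qed
  have partner: "\<exists>u. {u,z} \<in> Ev" if z: "z \<in> Ou" for z
  proof -
    obtain e where e: "e \<in> Ev" "z = phi e" using z phiO by blast
    have ze: "z \<in> e" using phi[OF e(1)] e(2) by simp
    obtain x y where xy: "e = {x,y}" using sgraph_edge[OF sEv e(1)] by (elim exE conjE)
    show ?thesis
    proof (cases "z = x")
      case True thus ?thesis using e(1) xy by (intro exI[of _ y]) (simp add: insert_commute)
    next
      case False hence "z = y" using ze xy by simp
      thus ?thesis using e(1) xy by (intro exI[of _ x]) simp
    qed
  qed
  define q where "q = (\<lambda>z. THE u. {u,z} \<in> Ev)"
  have qprop: "{q z, z} \<in> Ev" if z: "z \<in> Ou" for z
  proof -
    have "\<exists>!u. {u,z} \<in> Ev"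
    proof (rule ex_ex1I)
      show "\<exists>u. {u,z} \<in> Ev" using partner[OF z] .
    next
      fix u u' assume h: "{u,z} \<in> Ev" "{u',z} \<in> Ev"
      have "{u,z} = {u',z}" using uniq[of z "{u,z}" "{u',z}"] h z OV' by auto
      moreover have "u \<noteq> z" using sgraph_noloop[OF sEv h(1)] .
      ultimately show "u = u'" by (auto simp: doubleton_eq_iff)
    qed
    thus ?thesis unfolding q_def by (rule theI')
  qed
  have qV': "q z \<in> V'" and qz: "q z \<noteq> z" if z: "z \<in> Ou" for z
    using sgraph_in[OF sEv qprop[OF z]] sgraph_noloop[OF sEv qprop[OF z]] by auto
  have qN: "q z \<in> N" if z: "z \<in> Ou" for z
  proof (rule ccontr)
    assume "q z \<notin> N"
    hence "q z \<in> Ou" using qV'[OF z] unfolding Ou_def by simp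
    hence "q z = z" using oneO[OF qprop[OF z], of "q z" z] z by simp
    thus False using qz[OF z] by simp
  qed
  have qinj: "inj_on q Ou"
  proof (rule inj_onI)
    fix z1 z2 assume z: "z1 \<in> Ou" "z2 \<in> Ou" "q z1 = q z2"
    have a1: "{q z1, z1} \<in> Ev" using qprop[OF z(1)] .
    have a2: "{q z1, z2} \<in> Ev" using qprop[OF z(2)] z(3) by simp
    have "{q z1, z1} = {q z1, z2}" by (rule uniq[OF qV'[OF z(1)] a1 a2]) auto
    moreover have "q z1 \<noteq> z2" using qN[OF z(1)] z(2) NO by auto
    ultimately show "z1 = z2" by (auto simp: doubleton_eq_iff)
  qed
  have Ev_eq: "Ev = (\<lambda>z. {q z, z}) ` Ou"
  proof (rule set_eqI, rule iffI)
    fix e assume e: "e \<in> Ev"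
    have p1: "phi e \<in> e" "phi e \<in> Ou" using phi[OF e] by auto
    have p2: "{q (phi e), phi e} \<in> Ev" using qprop[OF p1(2)] .
    have "e = {q (phi e), phi e}" by (rule uniq[OF _ e p2 p1(1)]) (use p1 OV' in auto)
    thus "e \<in> (\<lambda>z. {q z, z}) ` Ou" using phi[OF e] by blast
  next
    fix e assume "e \<in> (\<lambda>z. {q z, z}) ` Ou"
    thus "e \<in> Ev" using qprop by blast
  qed
  define sO where "sO = card Ou"
  define W where "W = N - q ` Ou"
  have qON: "q ` Ou \<subseteq> N" using qN by blast
  have cqO: "card (q ` Ou) = sO" unfolding sO_def using card_image[OF qinj] .
  have cW: "card W = card N - sO" unfolding W_def using card_Diff_subset[OF _ qON] fN cqO
    by (metis finite_subset qON)
  have sN: "sO \<le> card N" using card_mono[OF fN qON] cqO by simp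
  have "card V > 0" using v fV by (simp add: card_gt_0_iff) blast
  hence n1: "n \<ge> 1" using n by simp
  have nW: "n = 2 * sO + 1 + card W" using cW sN cNO n1 unfolding sO_def by linarith
  have sbound: "sO \<le> (n - 1) div 2" using nW by simp
  have fW: "finite W" unfolding W_def using fN by simp
  obtain hO where hO: "bij_betw hO {0..<sO} Ou" using ex_bij_betw_nat_finite[OF fOu] unfolding sO_def by blast
  obtain hW where hW: "bij_betw hW {0..<card W} W" using ex_bij_betw_nat_finite[OF fW] by blast
  have hOin: "hO j \<in> Ou" if "j < sO" for j using bij_betwE[OF hO] that by simp
  have hWin: "hW j \<in> W" if "j < card W" for j using bij_betwE[OF hW] that by simp
  define g where "g = (\<lambda>i. if i = 0 then v else if i \<le> sO then q (hO (i - 1))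
      else if i \<le> 2 * sO then hO (i - sO - 1) else hW (i - 2 * sO - 1))"
  have g0: "g 0 = v" unfolding g_def by simp
  have g1: "g i = q (hO (i - 1))" if "1 \<le> i" "i \<le> sO" for i unfolding g_def using that by simp
  have g2: "g (sO + i) = hO (i - 1)" if "1 \<le> i" "i \<le> sO" for i unfolding g_def using that by simp
  have g3: "g j = hW (j - 2 * sO - 1)" if "2 * sO + 1 \<le> j" for j unfolding g_def using that by simp
  have WN: "W \<subseteq> N" unfolding W_def by auto
  have NV: "N \<subseteq> V" and OV: "Ou \<subseteq> V" using NV' OV' unfolding V'_def by auto
  have img: "g ` {..<n} = V"
  proof (rule set_eqI, rule iffI)
    fix x assume "x \<in> g ` {..<n}"
    then obtain i where i: "i < n" "x = g i" by auto
    consider "i = 0" | "1 \<le> i \<and> i \<le> sO" | "sO < i \<and> i \<le> 2 * sO" | "2 * sO + 1 \<le> i" by linarith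
    thus "x \<in> V"
    proof cases
      case 1 thus ?thesis using i g0 v by simp
    next
      case 2
      hence "i - 1 < sO" by linarith
      hence "hO (i - 1) \<in> Ou" using hOin by blast
      hence "q (hO (i - 1)) \<in> V" using qN NV by blast
      thus ?thesis using i g1 2 by simp
    next
      case 3
      hence "g i = hO (i - sO - 1)" unfolding g_def by simp
      moreover have "i - sO - 1 < sO" using 3 by linarith
      ultimately show ?thesis using i hOin OV by auto
    next
      case 4
      moreover have "i - 2 * sO - 1 < card W" using 4 i nW by linarith
      ultimately show ?thesis using i g3 hWin WN NV by auto
    qed
  next
    fix x assume x: "x \<in> V"
    have n1: "0 < n" using nW by simp
    show "x \<in> g ` {..<n}"
    proof (cases "x = v")
      case True thus ?thesis using g0 n1 by (intro image_eqI[of _ _ 0]) auto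
    next
      case False
      hence "x \<in> V'" using x unfolding V'_def by simp
      hence "x \<in> Ou \<or> x \<in> q ` Ou \<or> x \<in> W" unfolding Ou_def W_def by auto
      moreover
      { assume "x \<in> Ou"
        then obtain j where j: "j < sO" "x = hO j" using bij_betw_imp_surj_on[OF hO] by (metis atLeastLessThan_iff imageE)
        hence "x = g (sO + (j + 1))" using g2[of "j + 1"] by simp
        moreover have "sO + (j + 1) < n" using j nW by linarith
        ultimately have ?thesis by blast }
      moreover
      { assume "x \<in> q ` Ou"
        then obtain z where z: "z \<in> Ou" "x = q z" by blast
        then obtain j where j: "j < sO" "z = hO j" using bij_betw_imp_surj_on[OF hO] by (metis atLeastLessThan_iff imageE)
        hence "x = g (j + 1)" using g1[of "j + 1"] z by simp
        moreover have "j + 1 < n" using j nW by linarith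
        ultimately have ?thesis by blast }
      moreover
      { assume "x \<in> W"
        then obtain j where j: "j < card W" "x = hW j" using bij_betw_imp_surj_on[OF hW] by (metis atLeastLessThan_iff imageE)
        hence "x = g (2 * sO + 1 + j)" using g3[of "2 * sO + 1 + j"] by simp
        moreover have "2 * sO + 1 + j < n" using j nW by linarith
        ultimately have ?thesis by blast }
      ultimately show ?thesis by blast
    qed
  qed
  have bg: "bij_betw g (T_verts n) V"
  proof -
    have "card (g ` {..<n}) = card {..<n}" using img n by simp
    hence "inj_on g {..<n}" by (rule eq_card_imp_inj_on[rotated]) simp
    thus ?thesis unfolding bij_betw_def T_verts_def using img by simp
  qed
  have Esplit: "E = inc E v \<union> Ev"
  proof (rule set_eqI, rule iffI)
    fix e assume e: "e \<in> E"
    have "e \<subseteq> V" using sgraph_sub[OF s e] .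
    thus "e \<in> inc E v \<union> Ev" using e unfolding inc_def Ev_def V'_def by blast
  next
    fix e assume "e \<in> inc E v \<union> Ev"
    thus "e \<in> E" unfolding inc_def Ev_def by blast
  qed
  have incv: "inc E v = (\<lambda>u. {v,u}) ` N" unfolding N_def by (rule inc_eq[OF s])
  have T1: "{0, i} \<in> T_edges n sO" if "1 \<le> i" "i \<le> sO" for i
    unfolding T_edges_def using that by (intro UnI1 CollectI exI[of _ i]) simp
  have T2: "{i, sO + i} \<in> T_edges n sO" if "1 \<le> i" "i \<le> sO" for i
    unfolding T_edges_def using that by (intro UnI1 UnI2 CollectI exI[of _ i]) simp
  have T3: "{0, j} \<in> T_edges n sO" if "2 * sO + 1 \<le> j" "j < n" for j
    unfolding T_edges_def using that by (intro UnI2 CollectI exI[of _ j]) simp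
  have Eeq: "E = (\<lambda>e. g ` e) ` T_edges n sO"
  proof (rule set_eqI, rule iffI)
    fix e assume e: "e \<in> E"
    show "e \<in> (\<lambda>e. g ` e) ` T_edges n sO"
    proof (cases "e \<in> inc E v")
      case True
      then obtain u where u: "u \<in> N" "e = {v,u}" using incv by blast
      show ?thesis
      proof (cases "u \<in> q ` Ou")
        case True
        then obtain z where z: "z \<in> Ou" "u = q z" by blast
        then obtain j where j: "j < sO" "z = hO j" using bij_betw_imp_surj_on[OF hO] by (metis atLeastLessThan_iff imageE)
        have "e = g ` {0, j + 1}" using u z j g0 g1[of "j+1"] by simp
        moreover have "{0, j + 1} \<in> T_edges n sO" using T1 j by simp
        ultimately show ?thesis by blast
      next
        case False
        hence "u \<in> W" using u unfolding W_def by simp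
        then obtain j where j: "j < card W" "u = hW j" using bij_betw_imp_surj_on[OF hW] by (metis atLeastLessThan_iff imageE)
        have "e = g ` {0, 2 * sO + 1 + j}" using u j g0 g3[of "2 * sO + 1 + j"] by simp
        moreover have "{0, 2 * sO + 1 + j} \<in> T_edges n sO" using T3 j nW by simp
        ultimately show ?thesis by blast
      qed
    next
      case False
      hence "e \<in> Ev" using e Esplit by blast
      then obtain z where z: "z \<in> Ou" "e = {q z, z}" using Ev_eq by blast
      then obtain j where j: "j < sO" "z = hO j" using bij_betw_imp_surj_on[OF hO] by (metis atLeastLessThan_iff imageE)
      have "e = g ` {j + 1, sO + (j + 1)}" using z j g1[of "j+1"] g2[of "j+1"] by simp
      moreover have "{j + 1, sO + (j + 1)} \<in> T_edges n sO" using T2[of "j + 1"] j by linarith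
      ultimately show ?thesis by blast
    qed
  next
    fix e assume "e \<in> (\<lambda>e. g ` e) ` T_edges n sO"
    then obtain e' where e': "e' \<in> T_edges n sO" "e = g ` e'" by (elim imageE)
    hence "e' \<in> (\<lambda>i. {0,i}) ` {1..sO} \<or> e' \<in> (\<lambda>i. {i,sO+i}) ` {1..sO} \<or> e' \<in> (\<lambda>j. {0,j}) ` {2*sO+1..<n}"
      unfolding T_edges_eq by blast
    thus "e \<in> E"
    proof (elim disjE imageE)
      fix i assume i: "i \<in> {1..sO}" "e' = {0,i}"
      have "hO (i - 1) \<in> Ou" using hOin i by auto
      hence "q (hO (i - 1)) \<in> N" using qN by blast
      moreover have "e = {v, q (hO (i - 1))}" using e' i g0 g1 by auto
      ultimately show "e \<in> E" unfolding N_def nbr_def by simp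
    next
      fix i assume i: "i \<in> {1..sO}" "e' = {i,sO+i}"
      have "hO (i - 1) \<in> Ou" using hOin i by auto
      hence "{q (hO (i - 1)), hO (i - 1)} \<in> Ev" using qprop by blast
      moreover have "e = {q (hO (i - 1)), hO (i - 1)}" using e' i g1 g2 by auto
      ultimately show "e \<in> E" using EvE by auto
    next
      fix j assume j: "j \<in> {2*sO+1..<n}" "e' = {0,j}"
      have "hW (j - 2 * sO - 1) \<in> W" using hWin j nW by auto
      hence "hW (j - 2 * sO - 1) \<in> N" using WN by blast
      moreover have "e = {v, hW (j - 2 * sO - 1)}" using e' j g0 g3 by auto
      ultimately show "e \<in> E" unfolding N_def nbr_def by simp
    qed
  qed
  have "2 * sO + 1 \<le> n" using nW by simp
  hence "graph_iso V E (T_verts n) (T_edges n sO)"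
    by (intro iso_from_bij[OF bg T_edges_sub Eeq])
  thus "\<exists>s\<le>(n - 1) div 2. graph_iso V E (T_verts n) (T_edges n s)" using sbound by blast
qed



lemma cross_swap:
  assumes "\<forall>e\<in>E. \<exists>u v. e = {u, v} \<and> u \<in> A \<and> v \<in> B"
  shows "\<forall>e\<in>E. \<exists>u v. e = {u, v} \<and> u \<in> B \<and> v \<in> A"
proof
  fix e assume e: "e \<in> E"
  obtain u v where "e = {u,v}" "u \<in> A" "v \<in> B" using bspec[OF assms e] by (elim exE conjE)
  thus "\<exists>u v. e = {u, v} \<and> u \<in> B \<and> v \<in> A" by (intro exI[of _ v] exI[of _ u]) (simp add: insert_commute)
qed

lemma k2_main:
  fixes V :: "'a set"
  assumes s: "sgraph V E" and bp: "bipartite V E" and n: "card V = n" and n18: "n \<ge> 18"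
    and nc: "\<not> contains_kP3 2 V E"
  shows "card E \<le> n - 1 \<and> (card E = n - 1 \<longrightarrow> (\<exists>s\<le>(n - 1) div 2. graph_iso V E (T_verts n) (T_edges n s)))"
proof (cases "\<exists>v\<in>V. card (nbr E v) \<ge> 5")
  case True
  then obtain v where v: "v \<in> V" "card (nbr E v) \<ge> 5" by blast
  show ?thesis using k2_high[OF s bp n nc v(1) v(2)] by blast
next
  case False
  hence "\<forall>v\<in>V. card (nbr E v) \<le> 4" by force
  hence "card E < n - 1" using k2_low[OF s bp n n18 nc] by blast
  thus ?thesis by simp
qed

lemma bound_all:
  assumes k: "k \<ge> 2"
  shows "\<forall>(V::'a set) E n. sgraph V E \<longrightarrow> bipartite V E \<longrightarrow> card V = n \<longrightarrow> 11 * k - 4 \<le> n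
     \<longrightarrow> \<not> contains_kP3 k V E \<longrightarrow> card E \<le> (k - 1) * (n - k + 1)"
  using k
proof (induction k rule: nat_induct_at_least)
  case base
  show ?case
  proof (intro allI impI)
    fix V :: "'a set" and E n
    assume h: "sgraph V E" "bipartite V E" "card V = n" "11 * 2 - 4 \<le> n" "\<not> contains_kP3 2 V E"
    have "n \<ge> 18" using h(4) by simp
    moreover have "(2 - 1) * (n - 2 + 1) = n - 1" using \<open>n \<ge> 18\<close> by simp
    ultimately show "card E \<le> (2 - 1) * (n - 2 + 1)" using k2_main[OF h(1,2,3) _ h(5)] by presburger
  qed
next
  case (Suc k)
  show ?case
  proof (intro allI impI)
    fix V :: "'a set" and E n
    assume h: "sgraph V E" "bipartite V E" "card V = n" "11 * Suc k - 4 \<le> n" "\<not> contains_kP3 (Suc k) V E"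
    obtain A B where AB: "A \<union> B = V" "A \<inter> B = {}" "\<forall>e\<in>E. \<exists>u v. e = {u, v} \<and> u \<in> A \<and> v \<in> B"
      using h(2) unfolding bipartite_def by (elim exE conjE)
    have nk: "2 * Suc k \<le> n" using h(4) by linarith
    have k2: "Suc k \<ge> 2" using Suc.hyps by simp
    show "card E \<le> (Suc k - 1) * (n - Suc k + 1)"
    proof (cases "card A \<le> Suc k - 1")
      case True
      show ?thesis by (rule small_part(1)[OF h(1) AB h(3) True k2 nk])
    next
      case cA: False
      show ?thesis
      proof (cases "card B \<le> Suc k - 1")
        case True
        have AB': "B \<union> A = V" "B \<inter> A = {}" using AB by auto
        show ?thesis by (rule small_part(1)[OF h(1) AB' cross_swap[OF AB(3)] h(3) True k2 nk])
      next
        case False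
        have IH: "card E' \<le> (Suc k - 1 - 1) * (n' - (Suc k - 1) + 1)"
          if "sgraph V' E'" "bipartite V' E'" "card V' = n'" "11 * (Suc k - 1) - 4 \<le> n'"
             "\<not> contains_kP3 (Suc k - 1) V' E'" for V' :: "'a set" and E' n'
        proof -
          have a4: "11 * k - 4 \<le> n'" using that(4) by simp
          have a5: "\<not> contains_kP3 k V' E'" using that(5) by simp
          have "card E' \<le> (k - 1) * (n' - k + 1)" using Suc.IH that(1-3) a4 a5 by blast
          thus ?thesis by simp
        qed
        have "card E < (Suc k - 1) * (n - Suc k + 1)"
          by (rule strict_step[OF IH _ h(1) h(2) h(3) h(4) h(5) AB]) (use Suc.hyps cA False in auto)
        thus ?thesis by simp
      qed
    qed
  qed
qed

theorem mainTheorem2: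
  fixes V :: "'a set" and E :: "'a set set" and k n :: nat
  assumes "sgraph V E" and "bipartite V E"
    and "k \<ge> 2" and "card V = n" and "n \<ge> 11 * k - 4"
    and "\<not> contains_kP3 k V E"
  shows "card E \<le> (k - 1) * (n - k + 1)
    \<and> (k = 2 \<longrightarrow> (card E = (k - 1) * (n - k + 1) \<longleftrightarrow>
          (\<exists>s \<le> (n - 1) div 2. graph_iso V E (T_verts n) (T_edges n s))))
    \<and> (k \<ge> 3 \<longrightarrow> (card E = (k - 1) * (n - k + 1) \<longleftrightarrow>
          graph_iso V E (K_verts (k - 1) (n - k + 1)) (K_edges (k - 1) (n - k + 1))))"
proof (intro conjI impI)
  note s = assms(1) and bp = assms(2) and k = assms(3) and n = assms(4) assms(5) and nc = assms(6)
  show bd: "card E \<le> (k - 1) * (n - k + 1)" using bound_all[OF k] s bp n nc by blast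
  {
    assume k2: "k = 2"
    have n18: "n \<ge> 18" using n(2) k2 by simp
    have nc2: "\<not> contains_kP3 2 V E" using nc k2 by simp
    have m: "card E \<le> n - 1 \<and> (card E = n - 1 \<longrightarrow> (\<exists>s\<le>(n - 1) div 2. graph_iso V E (T_verts n) (T_edges n s)))"
      by (rule k2_main[OF s bp n(1) n18 nc2])
    show "card E = (k - 1) * (n - k + 1) \<longleftrightarrow> (\<exists>s\<le>(n - 1) div 2. graph_iso V E (T_verts n) (T_edges n s))"
    proof
      assume "card E = (k - 1) * (n - k + 1)"
      hence "card E = n - 1" using k2 n18 by simp
      thus "\<exists>s\<le>(n - 1) div 2. graph_iso V E (T_verts n) (T_edges n s)" using m by blast
    next
      assume "\<exists>s\<le>(n - 1) div 2. graph_iso V E (T_verts n) (T_edges n s)"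
      then obtain s' where s': "s' \<le> (n - 1) div 2" "graph_iso V E (T_verts n) (T_edges n s')" by blast
      have sn: "2 * s' + 1 \<le> n" using s'(1) n18 by linarith
      have "card E = card (T_edges n s')" by (rule iso_card[OF s'(2) s T_edges_in[OF sn]])
      also have "\<dots> = n - 1" by (rule card_T[OF sn])
      finally show "card E = (k - 1) * (n - k + 1)" using k2 n18 by simp
    qed
  }
  {
    assume k3: "k \<ge> 3"
    show "card E = (k - 1) * (n - k + 1) \<longleftrightarrow> graph_iso V E (K_verts (k - 1) (n - k + 1)) (K_edges (k - 1) (n - k + 1))"
    proof
      assume eq: "card E = (k - 1) * (n - k + 1)"
      obtain A B where AB: "A \<union> B = V" "A \<inter> B = {}" "\<forall>e\<in>E. \<exists>u v. e = {u, v} \<and> u \<in> A \<and> v \<in> B"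
        using bp unfolding bipartite_def by (elim exE conjE)
      have nk: "2 * k \<le> n" using n(2) k3 by linarith
      show "graph_iso V E (K_verts (k - 1) (n - k + 1)) (K_edges (k - 1) (n - k + 1))"
      proof (cases "card A \<le> k - 1")
        case True
        show ?thesis by (rule small_part(2)[OF s AB n(1) True k nk eq])
      next
        case cA: False
        show ?thesis
        proof (cases "card B \<le> k - 1")
          case True
          have AB': "B \<union> A = V" "B \<inter> A = {}" using AB by auto
          show ?thesis by (rule small_part(2)[OF s AB' cross_swap[OF AB(3)] n(1) True k nk eq])
        next
          case False
          have k1: "k - 1 \<ge> 2" using k3 by simp
          have IH: "card E' \<le> (k - 1 - 1) * (n' - (k - 1) + 1)"
            if "sgraph V' E'" "bipartite V' E'" "card V' = n'" "11 * (k - 1) - 4 \<le> n'"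
               "\<not> contains_kP3 (k - 1) V' E'" for V' :: "'a set" and E' n'
            using bound_all[OF k1] that by blast
          have "card E < (k - 1) * (n - k + 1)"
            by (rule strict_step[OF IH k3 s bp n(1) n(2) nc AB]) (use cA False in auto)
          thus ?thesis using eq by simp
        qed
      qed
    next
      assume iso: "graph_iso V E (K_verts (k - 1) (n - k + 1)) (K_edges (k - 1) (n - k + 1))"
      have "card E = card (K_edges (k - 1) (n - k + 1))" by (rule iso_card[OF iso s K_edges_in])
      thus "card E = (k - 1) * (n - k + 1)" using card_K by simp
    qed
  }
qed


end
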